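(* If $\varphi$ is a closed block-labelled formula in disjunctive form, then $\mathrm{dec}_s(\mathrm{enc}(\varphi), \varphi, \emptyset) =_f \varphi$, for any bijective renaming $f$ of propositional variables such that $f(X^k) = [\varphi[X^k]]^k$ for every $X^k\in\mathrm{bv}(\varphi)$.
   Context: An LTS is a tuple $(\Sigma, A, \to, s_0)$ with state set $\Sigma$, label set $A$, transition relation $\to\,\subseteq \Sigma\times A\times\Sigma$ (written $s \xrightarrow{a} s'$) and initial state $s_0$. Block-labelled formulas in disjunctive form are generated by $\varphi ::= \mathbf{ff} \mid \varphi_1 \lor \varphi_2 \mid \langle a\rangle\varphi_0 \mid \mu X^k.\varphi_0 \mid \neg\varphi_0 \mid X^k$, where $a$ ranges over action labels, $X$ over propositional variables and $k\in\mathbb{N}$ is a block number attached to every variable occurrence. $\mathrm{fv}(\varphi)$ and $\mathrm{bv}(\varphi)$ denote the free and bound variables; $\varphi$ is closed if $\mathrm{fv}(\varphi)=\emptyset$. All bound variables are assumed to have distinct names, and for $X^k\in\mathrm{bv}(\varphi)$, $\varphi[X^k]$ denotes the unique sub-formula of $\varphi$ of the form $\mu X^k.\varphi_0$. Encoding: $\mathrm{enc}(\varphi)$ is the LTS whose states are the sub-formulas of $\varphi$, with initial state $\varphi$, where $\mathbf{ff}$ has no outgoing transitions and the transitions are exactly: $X^k \xrightarrow{\lor} \varphi[X^k]$; $\neg\varphi_0 \xrightarrow{\neg} \varphi_0$; $\langle a\rangle\varphi_0 \xrightarrow{\langle a\rangle}\varphi_0$; $\varphi_1\lor\varphi_2 \xrightarrow{\lor}\varphi_1$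 and $\varphi_1\lor\varphi_2\xrightarrow{\lor}\varphi_2$; $\mu X^k.\varphi_0 \xrightarrow{\mu^k}\varphi_0$. (Labels are the symbols $\lor$, $\neg$, $\langle a\rangle$, $\mu^k$.) Decoding: for an LTS $P$ with labels of the forms $\lor,\neg,\langle a\rangle,\mu^k$, a state $s$ and a set $E$ of states, $\mathrm{dec}_s(P,s,E) = \bigvee_{s\xrightarrow{\sigma}s' \in P}\mathrm{dec}_t(P, s\xrightarrow{\sigma}s', E)$ (a disjunction built with binary $\lor$ in some enumeration order of the outgoing transitions; the empty disjunction is $\mathbf{ff}$), where $\mathrm{dec}_t(P,s\xrightarrow{\lor}s',E)=\mathrm{dec}_s(P,s',E)$, $\mathrm{dec}_t(P,s\xrightarrow{\neg}s',E)=\neg\mathrm{dec}_s(P,s',E)$, $\mathrm{dec}_t(P,s\xrightarrow{\langle a\rangle}s',E)=\langle a\rangle\mathrm{dec}_s(P,s',E)$, and $\mathrm{dec}_t(P,s\xrightarrow{\mu^k}s',E)$ equals $[s]^k$ if $s\in E$ and $\mu [s]^k.\mathrm{dec}_s(P,s',E\cup\{s\})$ otherwise. Here $[s]^k$ denotes a propositional variable with block number $k$ uniquely determined by the pair $(s,k)$. Equality modulo renaming, commutativity and idempotence: for a bijection $f$ on propositional variables, $=_f$ is the smallest relation on formulas such that whenever $\varphi_i =_f \varphi_i'$ ($i\in\{0,1,2\}$): $\mathbf{ff}=_f\mathbf{ff}$, $\neg\varphi_0=_f\neg\varphi_0'$, $\langle a\rangle\varphi_0=_f\langle a\rangle\varphi_0'$,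 $\varphi_1\lor\varphi_2=_f\varphi_1'\lor\varphi_2'$, $X=_f f(X)$ and $\mu X.\varphi_0=_f\mu f(X).\varphi_0'$ for every variable $X$; $\varphi_1\lor\varphi_2 =_f \varphi_2'\lor\varphi_1'$; $\varphi_0\lor\varphi_0=_f\varphi_0'$ and $\varphi_0=_f\varphi_0'\lor\varphi_0'$. *)

theory Defs
  imports Main
begin

text \<open>Block-labelled formulas in disjunctive form. A propositional variable is a
  pair (name, block number); Var x k is the occurrence of variable x with block k.\<close>
datatype ('a, 'v) fml =
    FF
  | Or "('a, 'v) fml" "('a, 'v) fml"
  | Dia 'a "('a, 'v) fml"
  | Mu 'v nat "('a, 'v) fml"
  | Neg "('a, 'v) fml"
  | Var 'v nat

fun subs :: "('a, 'v) fml \<Rightarrow> ('a, 'v) fml set" where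
  "subs FF = {FF}"
| "subs (Or p q) = insert (Or p q) (subs p \<union> subs q)"
| "subs (Dia a p) = insert (Dia a p) (subs p)"
| "subs (Mu x k p) = insert (Mu x k p) (subs p)"
| "subs (Neg p) = insert (Neg p) (subs p)"
| "subs (Var x k) = {Var x k}"

fun fv :: "('a, 'v) fml \<Rightarrow> ('v \<times> nat) set" where
  "fv FF = {}"
| "fv (Or p q) = fv p \<union> fv q"
| "fv (Dia a p) = fv p"
| "fv (Mu x k p) = fv p - {(x, k)}"
| "fv (Neg p) = fv p"
| "fv (Var x k) = {(x, k)}"

text \<open>List of binder occurrences (bound variables); distinctness of this list
  expresses that all bound variables have distinct names.\<close>
fun mus :: "('a, 'v) fml \<Rightarrow> ('v \<times> nat) list" where
  "mus FF = []"
| "mus (Or p q) = mus p @ mus q"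
| "mus (Dia a p) = mus p"
| "mus (Mu x k p) = (x, k) # mus p"
| "mus (Neg p) = mus p"
| "mus (Var x k) = []"

definition bv :: "('a, 'v) fml \<Rightarrow> ('v \<times> nat) set" where
  "bv p = set (mus p)"

text \<open>phi[X^k]: the unique sub-formula of the form Mu X k phi0.\<close>
definition sub_mu :: "('a, 'v) fml \<Rightarrow> 'v \<Rightarrow> nat \<Rightarrow> ('a, 'v) fml" where
  "sub_mu p x k = (THE q. q \<in> subs p \<and> (\<exists>q0. q = Mu x k q0))"

datatype 'a lbl = LOr | LNeg | LDia 'a | LMu nat

record ('s, 'l) lts =
  states :: "'s set"
  trans :: "('s \<times> 'l \<times> 's) set"
  init :: 's

definition enc :: "('a, 'v) fml \<Rightarrow> (('a, 'v) fml, 'a lbl) lts" where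
  "enc p = \<lparr> states = subs p,
     trans = {(Var x k, LOr, sub_mu p x k) | x k. Var x k \<in> subs p}
           \<union> {(Neg q, LNeg, q) | q. Neg q \<in> subs p}
           \<union> {(Dia a q, LDia a, q) | a q. Dia a q \<in> subs p}
           \<union> {(Or q1 q2, LOr, q1) | q1 q2. Or q1 q2 \<in> subs p}
           \<union> {(Or q1 q2, LOr, q2) | q1 q2. Or q1 q2 \<in> subs p}
           \<union> {(Mu x k q, LMu k, q) | x k q. Mu x k q \<in> subs p},
     init = p \<rparr>"

fun disj :: "('a, 'v) fml list \<Rightarrow> ('a, 'v) fml" where
  "disj [] = FF"
| "disj [p] = p"
| "disj (p # ps) = Or p (disj ps)"

text \<open>Decoding, as a relation: decs br P s E psi holds iff psi is a result of
  dec_s(P,s,E) for some enumeration order of outgoing transitions. The variable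
  [s]^k is Var (br s k) k.\<close>
inductive decs :: "('s \<Rightarrow> nat \<Rightarrow> 'v) \<Rightarrow> ('s, 'a lbl, 'z) lts_scheme \<Rightarrow> 's \<Rightarrow> 's set \<Rightarrow> ('a, 'v) fml \<Rightarrow> bool"
and dect :: "('s \<Rightarrow> nat \<Rightarrow> 'v) \<Rightarrow> ('s, 'a lbl, 'z) lts_scheme \<Rightarrow> 's \<times> 'a lbl \<times> 's \<Rightarrow> 's set \<Rightarrow> ('a, 'v) fml \<Rightarrow> bool"
  for br P where
  decs_intro: "\<lbrakk> distinct ts; set ts = {t \<in> trans P. fst t = s};
      list_all2 (\<lambda>t q. dect br P t E q) ts qs \<rbrakk> \<Longrightarrow> decs br P s E (disj qs)"
| dect_or: "decs br P s' E q \<Longrightarrow> dect br P (s, LOr, s') E q"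
| dect_neg: "decs br P s' E q \<Longrightarrow> dect br P (s, LNeg, s') E (Neg q)"
| dect_dia: "decs br P s' E q \<Longrightarrow> dect br P (s, LDia a, s') E (Dia a q)"
| dect_mu_in: "s \<in> E \<Longrightarrow> dect br P (s, LMu k, s') E (Var (br s k) k)"
| dect_mu_out: "\<lbrakk> s \<notin> E; decs br P s' (insert s E) q \<rbrakk>
      \<Longrightarrow> dect br P (s, LMu k, s') E (Mu (br s k) k q)"

text \<open>Equality modulo renaming f, commutativity and idempotence.\<close>
inductive eqf :: "('v \<times> nat \<Rightarrow> 'v \<times> nat) \<Rightarrow> ('a, 'v) fml \<Rightarrow> ('a, 'v) fml \<Rightarrow> bool"
  for f where
  eqf_ff: "eqf f FF FF"
| eqf_neg: "eqf f p p' \<Longrightarrow> eqf f (Neg p) (Neg p')"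
| eqf_dia: "eqf f p p' \<Longrightarrow> eqf f (Dia a p) (Dia a p')"
| eqf_or: "\<lbrakk> eqf f p1 p1'; eqf f p2 p2' \<rbrakk> \<Longrightarrow> eqf f (Or p1 p2) (Or p1' p2')"
| eqf_var: "f (x, k) = (y, m) \<Longrightarrow> eqf f (Var x k) (Var y m)"
| eqf_mu: "\<lbrakk> f (x, k) = (y, m); eqf f p p' \<rbrakk> \<Longrightarrow> eqf f (Mu x k p) (Mu y m p')"
| eqf_comm: "\<lbrakk> eqf f p1 p1'; eqf f p2 p2' \<rbrakk> \<Longrightarrow> eqf f (Or p1 p2) (Or p2' p1')"
| eqf_idem_l: "eqf f p p' \<Longrightarrow> eqf f (Or p p) p'"
| eqf_idem_r: "eqf f p p' \<Longrightarrow> eqf f p (Or p' p')"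

end

theory Submission
  imports Defs
begin


lemma subs_refl: "q \<in> subs q" by (cases q) auto
lemma subs_trans: "q \<in> subs p \<Longrightarrow> subs q \<subseteq> subs p"
  by (induction p) auto
lemma subs_size: "q \<in> subs p \<Longrightarrow> size q \<le> size p"
  by (induction p) auto
lemma mu_in_mus: "Mu x k r \<in> subs p \<Longrightarrow> (x,k) \<in> set (mus p)"
  by (induction p) auto
lemma mu_unique: "Mu x k a \<in> subs p \<Longrightarrow> Mu x k b \<in> subs p \<Longrightarrow> distinct (mus p) \<Longrightarrow> a = b"
proof (induction p)
  case (Or p1 p2) then show ?case using mu_in_mus by fastforce
next
  case (Mu y m r) then show ?case using mu_in_mus by fastforce
qed auto
lemma var_bound: "Var x k \<in> subs p \<Longrightarrow> (x,k) \<in> fv p \<or> (\<exists>r. Mu x k r \<in> subs p)"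
  by (induction p) auto

lemma sub_mu_eq: "Mu x k r \<in> subs p \<Longrightarrow> distinct (mus p) \<Longrightarrow> sub_mu p x k = Mu x k r"
  unfolding sub_mu_def
  by (rule the_equality) (auto dest: mu_unique)

lemma out_trans: "q \<in> subs p \<Longrightarrow> {t \<in> trans (enc p). fst t = q} = (case q of FF \<Rightarrow> {}
  | Or a b \<Rightarrow> {(q,LOr,a),(q,LOr,b)} | Dia a r \<Rightarrow> {(q,LDia a,r)} | Mu x k r \<Rightarrow> {(q,LMu k,r)}
  | Neg r \<Rightarrow> {(q,LNeg,r)} | Var x k \<Rightarrow> {(q,LOr,sub_mu p x k)})"
  by (cases q) (auto simp: enc_def)

lemma dist1: "distinct ts \<Longrightarrow> set ts = {a} \<Longrightarrow> ts = [a]"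
proof -
  assume d: "distinct ts" and s: "set ts = {a}"
  have "length ts = 1" using distinct_card[OF d] s by simp
  then obtain x where "ts = [x]" by (cases ts) auto
  then show ?thesis using s by auto
qed
lemma dist2: "distinct ts \<Longrightarrow> set ts = {a,b} \<Longrightarrow> a \<noteq> b \<Longrightarrow> ts = [a,b] \<or> ts = [b,a]"
proof -
  assume d: "distinct ts" and s: "set ts = {a,b}" and ab: "a \<noteq> b"
  have "length ts = 2" using distinct_card[OF d] s ab by simp
  then obtain x y where "ts = [x,y]"
    by (cases ts; cases "tl ts") auto
  then show ?thesis using s d by auto
qed

inductive_cases dect_orE: "dect br P (s, LOr, s') E q"
inductive_cases dect_negE: "dect br P (s, LNeg, s') E q"
inductive_cases dect_diaE: "dect br P (s, LDia a, s') E q"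
inductive_cases dect_muE: "dect br P (s, LMu k, s') E q"
inductive_cases decsE: "decs br P s E q"


lemma main:
  fixes \<phi> :: "('a, 'v) fml"
    and br :: "('a, 'v) fml \<Rightarrow> nat \<Rightarrow> 'v"
    and f :: "'v \<times> nat \<Rightarrow> 'v \<times> nat"
  assumes closed: "fv \<phi> = {}"
    and distinct_bv: "distinct (mus \<phi>)"
    and f_bv: "\<And>x k. (x, k) \<in> bv \<phi> \<Longrightarrow> f (x, k) = (br (sub_mu \<phi> x k) k, k)"
  shows "q \<in> subs \<phi> \<Longrightarrow> (\<forall>(x,k)\<in>fv q. sub_mu \<phi> x k \<in> E) \<Longrightarrow>
     (\<forall>x k r. Mu x k r \<in> subs q \<longrightarrow> Mu x k r \<notin> E) \<Longrightarrow>
     (\<exists>\<psi>. decs br (enc \<phi>) q E \<psi>) \<and> (\<forall>\<psi>. decs br (enc \<phi>) q E \<psi> \<longrightarrow> eqf f q \<psi>)"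
proof (induction q arbitrary: E)
  case FF
  have ex: "decs br (enc \<phi>) FF E FF"
    using decs_intro[where br=br and P="enc \<phi>" and ts="[]" and s=FF and E=E and qs="[]"] out_trans[OF FF.prems(1)] by simp
  show ?case
  proof (intro conjI allI impI)
    show "\<exists>\<psi>. decs br (enc \<phi>) FF E \<psi>" using ex by blast
  next
    fix \<psi> assume "decs br (enc \<phi>) FF E \<psi>"
    then show "eqf f FF \<psi>"
      by (rule decsE) (use out_trans[OF FF.prems(1)] in \<open>auto intro: eqf_ff\<close>)
  qed
next
  case (Or a b)
  have sa: "a \<in> subs \<phi>" and sb: "b \<in> subs \<phi>"
    using subs_trans[OF Or.prems(1)] subs_refl by auto
  have IHa: "(\<exists>\<psi>. decs br (enc \<phi>) a E \<psi>) \<and> (\<forall>\<psi>. decs br (enc \<phi>) a E \<psi> \<longrightarrow> eqf f a \<psi>)"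
  proof (rule Or.IH(1)[OF sa])
    show "\<forall>(x,k)\<in>fv a. sub_mu \<phi> x k \<in> E" using Or.prems(2) by auto
    show "\<forall>x k r. Mu x k r \<in> subs a \<longrightarrow> Mu x k r \<notin> E" using Or.prems(3) by auto
  qed
  have IHb: "(\<exists>\<psi>. decs br (enc \<phi>) b E \<psi>) \<and> (\<forall>\<psi>. decs br (enc \<phi>) b E \<psi> \<longrightarrow> eqf f b \<psi>)"
  proof (rule Or.IH(2)[OF sb])
    show "\<forall>(x,k)\<in>fv b. sub_mu \<phi> x k \<in> E" using Or.prems(2) by auto
    show "\<forall>x k r. Mu x k r \<in> subs b \<longrightarrow> Mu x k r \<notin> E" using Or.prems(3) by auto
  qed
  have ot: "{t \<in> trans (enc \<phi>). fst t = Or a b} = {(Or a b,LOr,a),(Or a b,LOr,b)}"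
    using out_trans[OF Or.prems(1)] by simp
  obtain pa pb where pa: "decs br (enc \<phi>) a E pa" and pb: "decs br (enc \<phi>) b E pb"
    using IHa IHb by blast
  show ?case
  proof (intro conjI allI impI)
    show "\<exists>\<psi>. decs br (enc \<phi>) (Or a b) E \<psi>"
    proof (cases "a = b")
      case True
      then show ?thesis using decs_intro[where br=br and P="enc \<phi>" and ts="[(Or a b,LOr,a)]" and s="Or a b" and E=E and qs="[pa]"] ot pa
        by (auto intro: dect_or)
    next
      case False
      then show ?thesis using decs_intro[where br=br and P="enc \<phi>" and ts="[(Or a b,LOr,a),(Or a b,LOr,b)]" and s="Or a b" and E=E and qs="[pa,pb]"] ot pa pb
        by (auto intro: dect_or)
    qed
  next
    fix \<psi> assume "decs br (enc \<phi>) (Or a b) E \<psi>"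
    then obtain ts qs where q: "\<psi> = disj qs" "distinct ts" "set ts = {(Or a b,LOr,a),(Or a b,LOr,b)}"
      "list_all2 (\<lambda>t. dect br (enc \<phi>) t E) ts qs"
      by (rule decsE) (use ot in auto)
    show "eqf f (Or a b) \<psi>"
    proof (cases "a = b")
      case True
      then have ts1: "ts = [(Or a b,LOr,a)]" using dist1[OF q(2)] q(3) True by simp
      then obtain qa where "qs = [qa]" "dect br (enc \<phi>) (Or a b,LOr,a) E qa"
        using q(4) by (auto simp: list_all2_Cons1)
      then show ?thesis using q(1) IHa True by (auto elim: dect_orE intro: eqf_idem_l)
    next
      case False
      then have ts1: "ts = [(Or a b,LOr,a),(Or a b,LOr,b)] \<or> ts = [(Or a b,LOr,b),(Or a b,LOr,a)]"
        using dist2[OF q(2,3)] by simp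
      then show ?thesis
      proof
        assume "ts = [(Or a b,LOr,a),(Or a b,LOr,b)]"
        then obtain qa qb where "qs = [qa,qb]" "dect br (enc \<phi>) (Or a b,LOr,a) E qa"
          "dect br (enc \<phi>) (Or a b,LOr,b) E qb"
          using q(4) by (auto simp: list_all2_Cons1)
        then show ?thesis using q(1) IHa IHb by (auto elim!: dect_orE intro: eqf_or)
      next
        assume "ts = [(Or a b,LOr,b),(Or a b,LOr,a)]"
        then obtain qa qb where "qs = [qb,qa]" "dect br (enc \<phi>) (Or a b,LOr,a) E qa"
          "dect br (enc \<phi>) (Or a b,LOr,b) E qb"
          using q(4) by (auto simp: list_all2_Cons1)
        then show ?thesis using q(1) IHa IHb by (auto elim!: dect_orE intro: eqf_comm)
      qed
    qed
  qed
next
  case (Dia a r)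
  have sr: "r \<in> subs \<phi>" using subs_trans[OF Dia.prems(1)] subs_refl by auto
  have IH: "(\<exists>\<psi>. decs br (enc \<phi>) r E \<psi>) \<and> (\<forall>\<psi>. decs br (enc \<phi>) r E \<psi> \<longrightarrow> eqf f r \<psi>)"
  proof (rule Dia.IH[OF sr])
    show "\<forall>(x,k)\<in>fv r. sub_mu \<phi> x k \<in> E" using Dia.prems(2) by auto
    show "\<forall>x k s. Mu x k s \<in> subs r \<longrightarrow> Mu x k s \<notin> E" using Dia.prems(3) by auto
  qed
  have ot: "{t \<in> trans (enc \<phi>). fst t = Dia a r} = {(Dia a r,LDia a,r)}"
    using out_trans[OF Dia.prems(1)] by simp
  obtain pr where pr: "decs br (enc \<phi>) r E pr" using IH by blast
  show ?case
  proof (intro conjI allI impI)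
    show "\<exists>\<psi>. decs br (enc \<phi>) (Dia a r) E \<psi>"
      using decs_intro[where br=br and P="enc \<phi>" and ts="[(Dia a r,LDia a,r)]" and s="Dia a r" and E=E and qs="[Dia a pr]"] ot pr
      by (auto intro: dect_dia)
  next
    fix \<psi> assume "decs br (enc \<phi>) (Dia a r) E \<psi>"
    then obtain ts qs where q: "\<psi> = disj qs" "distinct ts" "set ts = {(Dia a r,LDia a,r)}"
      "list_all2 (\<lambda>t. dect br (enc \<phi>) t E) ts qs"
      by (rule decsE) (use ot in auto)
    then have ts1: "ts = [(Dia a r,LDia a,r)]" using dist1[OF q(2,3)] by simp
    then obtain qa where "qs = [qa]" "dect br (enc \<phi>) (Dia a r,LDia a,r) E qa"
      using q(4) by (auto simp: list_all2_Cons1)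
    then show "eqf f (Dia a r) \<psi>" using q(1) IH by (auto elim!: dect_diaE intro: eqf_dia)
  qed
next
  case (Neg r)
  have sr: "r \<in> subs \<phi>" using subs_trans[OF Neg.prems(1)] subs_refl by auto
  have IH: "(\<exists>\<psi>. decs br (enc \<phi>) r E \<psi>) \<and> (\<forall>\<psi>. decs br (enc \<phi>) r E \<psi> \<longrightarrow> eqf f r \<psi>)"
  proof (rule Neg.IH[OF sr])
    show "\<forall>(x,k)\<in>fv r. sub_mu \<phi> x k \<in> E" using Neg.prems(2) by auto
    show "\<forall>x k s. Mu x k s \<in> subs r \<longrightarrow> Mu x k s \<notin> E" using Neg.prems(3) by auto
  qed
  have ot: "{t \<in> trans (enc \<phi>). fst t = Neg r} = {(Neg r,LNeg,r)}"
    using out_trans[OF Neg.prems(1)] by simp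
  obtain pr where pr: "decs br (enc \<phi>) r E pr" using IH by blast
  show ?case
  proof (intro conjI allI impI)
    show "\<exists>\<psi>. decs br (enc \<phi>) (Neg r) E \<psi>"
      using decs_intro[where br=br and P="enc \<phi>" and ts="[(Neg r,LNeg,r)]" and s="Neg r" and E=E and qs="[Neg pr]"] ot pr
      by (auto intro: dect_neg)
  next
    fix \<psi> assume "decs br (enc \<phi>) (Neg r) E \<psi>"
    then obtain ts qs where q: "\<psi> = disj qs" "distinct ts" "set ts = {(Neg r,LNeg,r)}"
      "list_all2 (\<lambda>t. dect br (enc \<phi>) t E) ts qs"
      by (rule decsE) (use ot in auto)
    then have ts1: "ts = [(Neg r,LNeg,r)]" using dist1[OF q(2,3)] by simp
    then obtain qa where "qs = [qa]" "dect br (enc \<phi>) (Neg r,LNeg,r) E qa"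
      using q(4) by (auto simp: list_all2_Cons1)
    then show "eqf f (Neg r) \<psi>" using q(1) IH by (auto elim!: dect_negE intro: eqf_neg)
  qed
next
  case (Mu x k r)
  let ?q = "Mu x k r"
  have sr: "r \<in> subs \<phi>" using subs_trans[OF Mu.prems(1)] subs_refl by auto
  have sm: "sub_mu \<phi> x k = ?q" using sub_mu_eq[OF Mu.prems(1) distinct_bv] .
  have fx: "f (x,k) = (br ?q k, k)" using f_bv sm mu_in_mus[OF Mu.prems(1)] by (simp add: bv_def)
  have nE: "?q \<notin> E" using Mu.prems(3) subs_refl by blast
  have IH: "(\<exists>\<psi>. decs br (enc \<phi>) r (insert ?q E) \<psi>) \<and> (\<forall>\<psi>. decs br (enc \<phi>) r (insert ?q E) \<psi> \<longrightarrow> eqf f r \<psi>)"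
  proof (rule Mu.IH[OF sr])
    show "\<forall>(y,m)\<in>fv r. sub_mu \<phi> y m \<in> insert ?q E" using Mu.prems(2) sm by auto
    show "\<forall>y m s. Mu y m s \<in> subs r \<longrightarrow> Mu y m s \<notin> insert ?q E"
    proof (intro allI impI)
      fix y m s assume a: "Mu y m s \<in> subs r"
      then have "size (Mu y m s) < size ?q" using subs_size[OF a] by simp
      then show "Mu y m s \<notin> insert ?q E" using Mu.prems(3) a by auto
    qed
  qed
  have ot: "{t \<in> trans (enc \<phi>). fst t = ?q} = {(?q,LMu k,r)}"
    using out_trans[OF Mu.prems(1)] by simp
  obtain pr where pr: "decs br (enc \<phi>) r (insert ?q E) pr" using IH by blast
  show ?case
  proof (intro conjI allI impI)
    show "\<exists>\<psi>. decs br (enc \<phi>) ?q E \<psi>"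
      using decs_intro[where br=br and P="enc \<phi>" and ts="[(?q,LMu k,r)]" and s="?q" and E=E and qs="[Mu (br ?q k) k pr]"] ot pr nE
      by (auto intro: dect_mu_out)
  next
    fix \<psi> assume "decs br (enc \<phi>) ?q E \<psi>"
    then obtain ts qs where q: "\<psi> = disj qs" "distinct ts" "set ts = {(?q,LMu k,r)}"
      "list_all2 (\<lambda>t. dect br (enc \<phi>) t E) ts qs"
      by (rule decsE) (use ot in auto)
    then have ts1: "ts = [(?q,LMu k,r)]" using dist1[OF q(2,3)] by simp
    then obtain qa where "qs = [qa]" "dect br (enc \<phi>) (?q,LMu k,r) E qa"
      using q(4) by (auto simp: list_all2_Cons1)
    then show "eqf f ?q \<psi>" using q(1) IH nE fx by (auto elim!: dect_muE intro: eqf_mu)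
  qed
next
  case (Var x k)
  obtain r0 where r0: "Mu x k r0 \<in> subs \<phi>" using var_bound[OF Var.prems(1)] closed by auto
  let ?M = "Mu x k r0"
  have sm: "sub_mu \<phi> x k = ?M" using sub_mu_eq[OF r0 distinct_bv] .
  have fx: "f (x,k) = (br ?M k, k)" using f_bv sm mu_in_mus[OF r0] by (simp add: bv_def)
  have inE: "?M \<in> E" using Var.prems(2) sm by simp
  have ot: "{t \<in> trans (enc \<phi>). fst t = Var x k} = {(Var x k,LOr,?M)}"
    using out_trans[OF Var.prems(1)] sm by simp
  have otM: "{t \<in> trans (enc \<phi>). fst t = ?M} = {(?M,LMu k,r0)}"
    using out_trans[OF r0] by simp
  have dM: "decs br (enc \<phi>) ?M E (Var (br ?M k) k)"
    using decs_intro[where br=br and P="enc \<phi>" and ts="[(?M,LMu k,r0)]" and s="?M" and E=E and qs="[Var (br ?M k) k]"] otM inE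
    by (auto intro: dect_mu_in)
  have uM: "\<psi> = Var (br ?M k) k" if dM2: "decs br (enc \<phi>) ?M E \<psi>" for \<psi>
  proof -
    obtain ts qs where q: "\<psi> = disj qs" "distinct ts" "set ts = {(?M,LMu k,r0)}"
      "list_all2 (\<lambda>t. dect br (enc \<phi>) t E) ts qs"
      using dM2 by (rule decsE) (use otM in auto)
    then have ts1: "ts = [(?M,LMu k,r0)]" using dist1[OF q(2,3)] by simp
    then obtain qa where "qs = [qa]" "dect br (enc \<phi>) (?M,LMu k,r0) E qa"
      using q(4) by (auto simp: list_all2_Cons1)
    then show ?thesis using q(1) inE by (auto elim!: dect_muE)
  qed
  show ?case
  proof (intro conjI allI impI)
    show "\<exists>\<psi>. decs br (enc \<phi>) (Var x k) E \<psi>"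
      using decs_intro[where br=br and P="enc \<phi>" and ts="[(Var x k,LOr,?M)]" and s="Var x k" and E=E and qs="[Var (br ?M k) k]"] ot dM
      by (auto intro: dect_or)
  next
    fix \<psi> assume "decs br (enc \<phi>) (Var x k) E \<psi>"
    then obtain ts qs where q: "\<psi> = disj qs" "distinct ts" "set ts = {(Var x k,LOr,?M)}"
      "list_all2 (\<lambda>t. dect br (enc \<phi>) t E) ts qs"
      by (rule decsE) (use ot in auto)
    then have ts1: "ts = [(Var x k,LOr,?M)]" using dist1[OF q(2,3)] by simp
    then obtain qa where "qs = [qa]" "dect br (enc \<phi>) (Var x k,LOr,?M) E qa"
      using q(4) by (auto simp: list_all2_Cons1)
    then show "eqf f (Var x k) \<psi>" using q(1) uM fx by (auto elim!: dect_orE intro: eqf_var)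
  qed
qed


theorem proposition2:
  fixes \<phi> :: "('a, 'v) fml"
    and br :: "('a, 'v) fml \<Rightarrow> nat \<Rightarrow> 'v"
    and f :: "'v \<times> nat \<Rightarrow> 'v \<times> nat"
  assumes br_inj: "\<And>k. inj (\<lambda>s. br s k)"
    and closed: "fv \<phi> = {}"
    and distinct_bv: "distinct (mus \<phi>)"
    and f_bij: "bij f"
    and f_bv: "\<And>x k. (x, k) \<in> bv \<phi> \<Longrightarrow> f (x, k) = (br (sub_mu \<phi> x k) k, k)"
  shows "(\<exists>\<psi>. decs br (enc \<phi>) \<phi> {} \<psi>) \<and>
         (\<forall>\<psi>. decs br (enc \<phi>) \<phi> {} \<psi> \<longrightarrow> eqf f \<phi> \<psi>)"
proof -
  have p1: "\<phi> \<in> subs \<phi>" by (rule subs_refl)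
  have p2: "\<forall>(x,k)\<in>fv \<phi>. sub_mu \<phi> x k \<in> {}" by (simp add: closed)
  have p3: "\<forall>x k r. Mu x k r \<in> subs \<phi> \<longrightarrow> Mu x k r \<notin> {}" by simp
  show ?thesis by (rule main[OF closed distinct_bv f_bv p1 p2 p3])
qed

end
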